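(* Let $T=(T_{i,j})_{i,j\in\mathbb{Z}}$ be a translation-invariant stochastic matrix on $\mathbb{Z}$ that is strictly finite-ranged: there are nonnegative integers $l_1,l_2$ with $T_{j-l,j}=0$ for $l>l_1$, $T_{j+l,j}=0$ for $l>l_2$, $T_{j-l_1,j}\ne0$, $T_{j+l_2,j}\ne0$. Let $\xi(k)=\sum_lT_{j+l,j}e^{-ikl}$ and assume $\xi(k)\ne0$ for all $k\in[-\pi,\pi]$. If $$T_{j-l_1,j}\ge T_{j-l_1+1,j}\ge\cdots\ge T_{j+l_2,j}\ (\ge0),$$ then $w(T,0)=l_1$. In particular, if $T_{j+l,j}=0$ for all $l<0$ and $T_{j,j}\ge T_{j+1,j}\ge\cdots\ge T_{j+l_2,j}$, then $w(T,0)=0$.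
   Context: A stochastic matrix on $\mathbb{Z}$ is a real matrix $(T_{i,j})$ with $T_{i,j}\ge0$ and $\sum_iT_{i,j}=1$ for each $j$; it is translation invariant if $T_{i+1,j+1}=T_{i,j}$ (so $T_{j+l,j}$ is independent of $j$). The winding number is $w(T,0)=\int_{-\pi}^{\pi}\frac{dk}{2\pi i}\partial_k\log\xi(k)\in\mathbb{Z}$. *)

theory Defs
  imports "HOL-Analysis.Analysis"
begin

text \<open>Matrices on Z are functions T :: int => int => real, T i j = T_{i,j}.\<close>

definition stochastic :: "(int \<Rightarrow> int \<Rightarrow> real) \<Rightarrow> bool" where
  "stochastic T \<longleftrightarrow> (\<forall>i j. T i j \<ge> 0) \<and> (\<forall>j. ((\<lambda>i. T i j) has_sum 1) UNIV)"

definition translation_invariant :: "(int \<Rightarrow> int \<Rightarrow> real) \<Rightarrow> bool" where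
  "translation_invariant T \<longleftrightarrow> (\<forall>i j. T (i + 1) (j + 1) = T i j)"

definition strictly_finite_ranged :: "(int \<Rightarrow> int \<Rightarrow> real) \<Rightarrow> nat \<Rightarrow> nat \<Rightarrow> bool" where
  "strictly_finite_ranged T l1 l2 \<longleftrightarrow>
     (\<forall>j l. l > int l1 \<longrightarrow> T (j - l) j = 0) \<and>
     (\<forall>j l. l > int l2 \<longrightarrow> T (j + l) j = 0) \<and>
     (\<forall>j. T (j - int l1) j \<noteq> 0) \<and> (\<forall>j. T (j + int l2) j \<noteq> 0)"

text \<open>xi(k) = sum_l T_{j+l,j} e^{-ikl}, taken at j = 0 (independent of j by translation invariance).\<close>
definition xi :: "(int \<Rightarrow> int \<Rightarrow> real) \<Rightarrow> real \<Rightarrow> complex" where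
  "xi T k = (\<Sum>\<^sub>\<infinity>l\<in>UNIV. complex_of_real (T l 0) * exp (- \<i> * of_real k * of_int l))"

text \<open>w(T,0) = int_{-pi}^{pi} dk/(2 pi i) d/dk log xi(k), with d/dk log xi = xi'/xi.\<close>
definition winding :: "(int \<Rightarrow> int \<Rightarrow> real) \<Rightarrow> complex" where
  "winding T = integral {-pi..pi} (\<lambda>k. vector_derivative (xi T) (at k) / xi T k) / (2 * of_real pi * \<i>)"

end

theory Submission
  imports Defs "HOL-Complex_Analysis.Complex_Analysis"
begin

lemma EK:
  fixes z :: complex
  assumes "norm z \<le> 1"
  shows "\<forall>c::nat\<Rightarrow>real. (\<forall>m<n. c (Suc m) \<le> c m) \<longrightarrow> 0 \<le> c n \<longrightarrow>
     (1 - norm z) * c 0 \<le> Re ((1 - z) * (\<Sum>m\<le>n. of_real (c m) * z ^ m))"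
proof (induction n)
  case 0
  show ?case
  proof (intro allI impI)
    fix c :: "nat \<Rightarrow> real" assume "0 \<le> c 0"
    have "Re z \<le> norm z" by (rule complex_Re_le_cmod)
    then show "(1 - norm z) * c 0 \<le> Re ((1 - z) * (\<Sum>m\<le>0. of_real (c m) * z ^ m))"
      using \<open>0 \<le> c 0\<close> by (simp add: algebra_simps mult_right_mono)
  qed
next
  case (Suc n)
  show ?case
  proof (intro allI impI)
    fix c :: "nat \<Rightarrow> real"
    assume mono: "\<forall>m<Suc n. c (Suc m) \<le> c m" and pos: "0 \<le> c (Suc n)"
    define c' where "c' m = c m - c (Suc n)" for m
    have m': "\<forall>m<n. c' (Suc m) \<le> c' m" using mono by (simp add: c'_def)
    have p': "0 \<le> c' n" using mono by (simp add: c'_def)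
    have IH: "(1 - norm z) * c' 0 \<le> Re ((1 - z) * (\<Sum>m\<le>n. of_real (c' m) * z ^ m))"
      using Suc.IH m' p' by blast
    have split: "(\<Sum>m\<le>Suc n. of_real (c m) * z ^ m) =
        (\<Sum>m\<le>n. of_real (c' m) * z ^ m) + of_real (c (Suc n)) * (\<Sum>m<Suc (Suc n). z ^ m)"
      by (simp add: c'_def sum_distrib_left algebra_simps sum.distrib lessThan_Suc_atMost sum_subtractf)
    have geo: "(1 - z) * (\<Sum>m<Suc (Suc n). z ^ m) = 1 - z ^ Suc (Suc n)"
      by (simp only: one_diff_power_eq)
    have nz: "norm (z ^ Suc (Suc n)) \<le> norm z"
    proof -
      have "norm z ^ Suc (Suc n) \<le> norm z ^ 1"
        by (rule power_decreasing) (use assms in auto)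
      then show ?thesis by (simp only: norm_power power_one_right)
    qed
    have "Re (z ^ Suc (Suc n)) \<le> norm (z ^ Suc (Suc n))" by (rule complex_Re_le_cmod)
    then have g2: "1 - norm z \<le> Re (1 - z ^ Suc (Suc n))" using nz by simp
    have "Re ((1 - z) * (\<Sum>m\<le>Suc n. of_real (c m) * z ^ m)) =
        Re ((1 - z) * (\<Sum>m\<le>n. of_real (c' m) * z ^ m)) + c (Suc n) * Re (1 - z ^ Suc (Suc n))"
      unfolding split distrib_left geo[symmetric] by (simp add: algebra_simps)
    also have "\<dots> \<ge> (1 - norm z) * c' 0 + c (Suc n) * (1 - norm z)"
      using IH g2 pos by (intro add_mono mult_left_mono) auto
    finally show "(1 - norm z) * c 0 \<le> Re ((1 - z) * (\<Sum>m\<le>Suc n. of_real (c m) * z ^ m))"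
      by (simp add: c'_def algebra_simps)
  qed
qed

lemma xi_finite:
  assumes z1: "\<forall>l. l > int l1 \<longrightarrow> T (-l) 0 = 0" and z2: "\<forall>l. l > int l2 \<longrightarrow> T l 0 = 0"
  shows "xi T k = (\<Sum>l\<in>{-int l1..int l2}. of_real (T l 0) * exp (- \<i> * of_real k * of_int l))"
proof -
  have "xi T k = (\<Sum>\<^sub>\<infinity>l\<in>{-int l1..int l2}. of_real (T l 0) * exp (- \<i> * of_real k * of_int l))"
    unfolding xi_def
  proof (rule infsum_cong_neutral)
    fix x assume "x \<in> UNIV - {-int l1..int l2}"
    then have "x < - int l1 \<or> x > int l2" by auto
    then have "T x 0 = 0" using z1 z2 by (metis minus_less_iff minus_minus)
    then show "of_real (T x 0) * exp (- \<i> * of_real k * of_int x) = 0" by simp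
  qed auto
  then show ?thesis by simp
qed

lemma reindex:
  "(\<Sum>l\<in>{-int l1..int l2}. F l) = (\<Sum>m\<le>l1+l2. F (int m - int l1))"
  by (rule sum.reindex_bij_witness[where j="\<lambda>l. nat (l + int l1)" and i="\<lambda>m. int m - int l1"]) auto

lemma core:
  fixes T :: "int \<Rightarrow> int \<Rightarrow> real" and l1 l2 :: nat
  assumes nonneg: "\<forall>i. T i 0 \<ge> 0"
    and z1: "\<forall>l. l > int l1 \<longrightarrow> T (-l) 0 = 0" and z2: "\<forall>l. l > int l2 \<longrightarrow> T l 0 = 0"
    and nz1: "T (- int l1) 0 \<noteq> 0"
    and mono: "\<forall>l l'. - int l1 \<le> l \<and> l \<le> l' \<and> l' \<le> int l2 \<longrightarrow> T l' 0 \<le> T l 0"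
    and xinz: "\<forall>k\<in>{-pi..pi}. xi T k \<noteq> 0"
  shows "winding T = of_nat l1"
proof -
  define n where "n = l1 + l2"
  define c where "c m = T (int m - int l1) 0" for m
  define P where "P z = (\<Sum>m\<le>n. of_real (c m) * z ^ m)" for z :: complex
  have xiP: "xi T k = exp (\<i> * of_nat l1 * of_real k) * P (exp (- \<i> * of_real k))" for k
  proof -
    have "xi T k = (\<Sum>m\<le>n. of_real (c m) * exp (- \<i> * of_real k * of_int (int m - int l1)))"
      unfolding xi_finite[of l1 T l2 k, OF z1 z2] reindex n_def c_def ..
    also have "\<dots> = (\<Sum>m\<le>n. exp (\<i> * of_nat l1 * of_real k) * (of_real (c m) * exp (- \<i> * of_real k) ^ m))"
    proof (rule sum.cong[OF refl])
      fix m assume "m \<in> {..n}"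
      have "exp (- \<i> * of_real k * of_int (int m - int l1)) = exp (\<i> * of_nat l1 * of_real k + of_nat m * (- \<i> * of_real k))"
        by (simp add: algebra_simps)
      also have "\<dots> = exp (\<i> * of_nat l1 * of_real k) * exp (- \<i> * of_real k) ^ m"
        by (simp only: exp_add exp_of_nat_mult)
      finally show "of_real (c m) * exp (- \<i> * of_real k * of_int (int m - int l1)) = exp (\<i> * of_nat l1 * of_real k) * (of_real (c m) * exp (- \<i> * of_real k) ^ m)"
        by simp
    qed
    also have "\<dots> = exp (\<i> * of_nat l1 * of_real k) * P (exp (- \<i> * of_real k))"
      by (simp add: P_def sum_distrib_left)
    finally show ?thesis .
  qed
  have c0: "c 0 > 0" using nonneg nz1 by (simp add: c_def order_le_neq_trans)
  have cmono: "\<forall>m<n. c (Suc m) \<le> c m" using mono by (simp add: c_def n_def)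
  have cn: "0 \<le> c n" using nonneg by (simp add: c_def)
  have Pin: "P z \<noteq> 0" if "norm z < 1" for z
  proof
    assume "P z = 0"
    have "(1 - norm z) * c 0 \<le> Re ((1 - z) * P z)"
      using EK[of z n] that cmono cn by (simp add: P_def)
    moreover have "(1 - norm z) * c 0 > 0" using that c0 by simp
    ultimately show False using \<open>P z = 0\<close> by simp
  qed
  have Pon: "P z \<noteq> 0" if "norm z = 1" for z
  proof -
    have z0: "z \<noteq> 0" using that by auto
    define k where "k = - Arg z"
    have k: "k \<in> {-pi..pi}" using Arg_bounded[of z] by (auto simp: k_def)
    have "exp (- \<i> * of_real k) = z"
      using Arg_eq[OF z0] that by (simp add: k_def)
    then show ?thesis using xinz k xiP[of k] by auto
  qed
  have Pcb: "P z \<noteq> 0" if "z \<in> cball 0 1" for z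
    using Pin Pon that by (cases "norm z < 1") (auto simp: dist_norm)
  have Pholo: "P holomorphic_on UNIV" unfolding P_def by (intro holomorphic_intros)
  have op: "open {z. P z \<noteq> 0}"
    by (rule open_Collect_neq) (use Pholo holomorphic_on_imp_continuous_on in \<open>auto intro: continuous_intros\<close>)
  have sub: "cball 0 1 \<subseteq> {z. P z \<noteq> 0}" using Pcb by blast
  obtain e where e: "e > 0" "(\<Union>x\<in>cball 0 1. ball x e) \<subseteq> {z. P z \<noteq> 0}"
    using compact_subset_open_imp_ball_epsilon_subset[OF compact_cball op sub] by blast
  define A where "A = ball (0::complex) (1 + e)"
  have PA: "P z \<noteq> 0" if "z \<in> A" for z
  proof (cases "norm z \<le> 1")
    case True then show ?thesis using Pcb by auto
  next
    case False
    define x where "x = z / of_real (norm z)"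
    have znz: "z \<noteq> 0" using False by auto
    have "norm x = 1" using znz by (simp add: x_def norm_divide)
    moreover have "dist x z < e"
    proof -
      have "z - x = z * of_real (1 - 1 / norm z)" using znz by (simp add: x_def field_simps)
      moreover have "0 \<le> 1 - 1 / norm z" using False by (simp add: divide_simps)
      ultimately have "norm (z - x) = norm z * (1 - 1 / norm z)"
        by (simp only: norm_mult norm_of_real abs_of_nonneg)
      also have "\<dots> = norm z - 1" using znz by (simp add: field_simps)
      finally show ?thesis using that by (simp add: A_def dist_norm norm_minus_commute)
    qed
    ultimately have "x \<in> cball 0 1" "z \<in> ball x e" by (auto simp: dist_norm)
    then show ?thesis using e(2) by blast
  qed
  obtain g where g: "g holomorphic_on A" "\<And>x. x \<in> A \<Longrightarrow> exp (g x) = P x"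
    using holomorphic_logarithm_exists[of A P 0] PA Pholo e(1)
    by (auto simp: A_def intro: holomorphic_on_subset)
  have unitA: "exp (- \<i> * of_real k) \<in> A" for k :: real
    using e(1) by (simp add: A_def)
  define H where "H w = \<i> * of_nat l1 * w + g (exp (- \<i> * w))" for w
  define H' where "H' w = \<i> * of_nat l1 + deriv g (exp (- \<i> * w)) * (- \<i> * exp (- \<i> * w))" for w
  have dg: "(g has_field_derivative deriv g u) (at u)" if "u \<in> A" for u
    using holomorphic_derivI[OF g(1) _ that] by (simp add: A_def)
  have dH: "(H has_field_derivative H' (of_real k)) (at (of_real k))" for k :: real
  proof -
    have "((\<lambda>w. g (exp (- \<i> * w))) has_field_derivative deriv g (exp (- \<i> * of_real k)) * (- \<i> * exp (- \<i> * of_real k))) (at (of_real k))"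
      by (rule DERIV_chain2[where g="\<lambda>w. exp (- \<i> * w)", OF dg[OF unitA[of k]]]) (auto intro!: derivative_eq_intros)
    then show ?thesis unfolding H_def H'_def
      by (auto intro!: derivative_eq_intros)
  qed
  have xiH: "xi T k = exp (H (of_real k))" for k
    using g(2)[OF unitA] by (simp add: H_def exp_add xiP)
  have xiH': "xi T = (\<lambda>k. exp (H (of_real k)))" by (rule ext) (rule xiH)
  have dxi: "vector_derivative (xi T) (at k) / xi T k = H' (of_real k)" for k
  proof -
    have "((\<lambda>w. exp (H w)) has_field_derivative exp (H (of_real k)) * H' (of_real k)) (at (of_real k))"
      using dH[of k] by (auto intro!: derivative_eq_intros)
    then have "((\<lambda>k. exp (H (of_real k))) has_vector_derivative exp (H (of_real k)) * H' (of_real k)) (at k)"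
      by (rule has_vector_derivative_real_field)
    then have "(xi T has_vector_derivative exp (H (of_real k)) * H' (of_real k)) (at k)"
      using xiH' by simp
    then have "vector_derivative (xi T) (at k) = exp (H (of_real k)) * H' (of_real k)"
      by (rule vector_derivative_at)
    then show ?thesis by (simp add: xiH)
  qed
  have "((\<lambda>k. H' (of_real k)) has_integral (H (of_real pi) - H (of_real (-pi)))) {-pi..pi}"
    by (rule fundamental_theorem_of_calculus) (auto intro: has_vector_derivative_real_field dH)
  then have "integral {-pi..pi} (\<lambda>k. vector_derivative (xi T) (at k) / xi T k) = H (of_real pi) - H (of_real (-pi))"
    unfolding dxi by (rule integral_unique)
  also have "\<dots> = 2 * of_real pi * \<i> * of_nat l1"
  proof -
    have "exp (- \<i> * of_real pi) = exp (- \<i> * of_real (- pi))" by (simp add: exp_minus)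
    then show ?thesis unfolding H_def by (simp add: algebra_simps)
  qed
  finally show ?thesis unfolding winding_def by simp
qed

theorem mainTheorem5:
  fixes T :: "int \<Rightarrow> int \<Rightarrow> real"
  assumes "stochastic T" and "translation_invariant T"
    and "\<forall>k\<in>{-pi..pi}. xi T k \<noteq> 0"
  shows "(\<forall>l1 l2. strictly_finite_ranged T l1 l2 \<longrightarrow>
            (\<forall>j l l'. - int l1 \<le> l \<and> l \<le> l' \<and> l' \<le> int l2 \<longrightarrow> T (j + l') j \<le> T (j + l) j) \<longrightarrow>
            winding T = of_nat l1)
       \<and> (\<forall>l1 l2. strictly_finite_ranged T l1 l2 \<longrightarrow>
            (\<forall>j l. l < 0 \<longrightarrow> T (j + l) j = 0) \<longrightarrow>
            (\<forall>j l l'. 0 \<le> l \<and> l \<le> l' \<and> l' \<le> int l2 \<longrightarrow> T (j + l') j \<le> T (j + l) j) \<longrightarrow>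
            winding T = 0)"
proof -
  have nonneg: "\<forall>i. T i 0 \<ge> 0" using assms(1) by (simp add: stochastic_def)
  have P1: "winding T = of_nat l1"
    if sfr: "strictly_finite_ranged T l1 l2"
      and mono: "\<forall>j l l'. - int l1 \<le> l \<and> l \<le> l' \<and> l' \<le> int l2 \<longrightarrow> T (j + l') j \<le> T (j + l) j"
    for l1 l2
  proof (rule core[of T l1 l2])
    show "\<forall>i. T i 0 \<ge> 0" by (rule nonneg)
    show "\<forall>l. l > int l1 \<longrightarrow> T (-l) 0 = 0" using sfr unfolding strictly_finite_ranged_def
      by (metis diff_0)
    show "\<forall>l. l > int l2 \<longrightarrow> T l 0 = 0" using sfr unfolding strictly_finite_ranged_def
      by (metis add_0)
    show "T (- int l1) 0 \<noteq> 0" using sfr unfolding strictly_finite_ranged_def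
      by (metis diff_0)
    show "\<forall>l l'. - int l1 \<le> l \<and> l \<le> l' \<and> l' \<le> int l2 \<longrightarrow> T l' 0 \<le> T l 0"
      using mono by (metis add_0)
    show "\<forall>k\<in>{-pi..pi}. xi T k \<noteq> 0" by (rule assms(3))
  qed
  show ?thesis
  proof (intro conjI allI impI)
    fix l1 l2 assume "strictly_finite_ranged T l1 l2"
      "\<forall>j l l'. - int l1 \<le> l \<and> l \<le> l' \<and> l' \<le> int l2 \<longrightarrow> T (j + l') j \<le> T (j + l) j"
    then show "winding T = of_nat l1" by (rule P1)
  next
    fix l1 l2 assume sfr: "strictly_finite_ranged T l1 l2"
      and neg: "\<forall>j l. l < 0 \<longrightarrow> T (j + l) j = 0"
      and mono: "\<forall>j l l'. 0 \<le> l \<and> l \<le> l' \<and> l' \<le> int l2 \<longrightarrow> T (j + l') j \<le> T (j + l) j"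
    have "l1 = 0"
    proof (rule ccontr)
      assume "l1 \<noteq> 0"
      then have "- int l1 < 0" by simp
      then have "T (0 + (- int l1)) 0 = 0" using neg by blast
      moreover have "T (0 - int l1) 0 \<noteq> 0" using sfr unfolding strictly_finite_ranged_def by blast
      ultimately show False by simp
    qed
    then have "winding T = of_nat 0" using P1[OF sfr] mono by simp
    then show "winding T = 0" by simp
  qed
qed

end
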